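(* Let $M$ be a mutually algebraic structure with universe an infinite cardinal $\lambda$ such that $Th(M)$ is not purely monadic. Then for some $k\ge2$ there is a subset $Y\subseteq\lambda^k$ definable in $M$ with parameters that is mutually algebraic and such that $Y\setminus\Delta_k$ is infinite, where $\Delta_k=\{(a,\dots,a):a\in\lambda\}$.
   Context: $Y\subseteq\lambda^k$ is mutually algebraic if there is an integer $m$ such that for every $a\in\lambda$ at most $m$ tuples of $Y$ have $a$ as a coordinate. $Y^*\subseteq\lambda^{k+\ell}$ is padded mutually algebraic if for some permutation $\sigma$ of the $k+\ell$ coordinates, $Y^*=\sigma(Y\times\lambda^\ell)$ for some mutually algebraic $Y\subseteq\lambda^k$. A structure $M$ with universe $\lambda$ is mutually algebraic if every set definable with parameters in $M$ is a boolean combination of parameter-definable padded mutually algebraic sets. A complete theory $T$ is purely monadic if for every model with universe $\lambda$, every parameter-definable $Y\subseteq\lambda^k$ is definable in some structure $(\lambda,U_1,\dots,U_n)$ with $U_i$ unary. *)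

theory Defs
  imports Main
begin

datatype 'f trm = Var nat | Fun 'f "'f trm list"

datatype ('f, 'r) fm =
    Eq "'f trm" "'f trm"
  | Rel 'r "'f trm list"
  | Neg "('f, 'r) fm"
  | Conj "('f, 'r) fm" "('f, 'r) fm"
  | Ex nat "('f, 'r) fm"

text \<open>A structure whose universe is the whole type 'a: interpretations of the
function symbols and of the relation symbols.\<close>
type_synonym ('f, 'r, 'a) struct = "('f \<Rightarrow> 'a list \<Rightarrow> 'a) \<times> ('r \<Rightarrow> 'a list \<Rightarrow> bool)"

fun eval :: "('f, 'r, 'a) struct \<Rightarrow> (nat \<Rightarrow> 'a) \<Rightarrow> 'f trm \<Rightarrow> 'a" where
  "eval S e (Var n) = e n"
| "eval S e (Fun f ts) = fst S f (map (eval S e) ts)"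

fun sat :: "('f, 'r, 'a) struct \<Rightarrow> ('f, 'r) fm \<Rightarrow> (nat \<Rightarrow> 'a) \<Rightarrow> bool" where
  "sat S (Eq s t) e = (eval S e s = eval S e t)"
| "sat S (Rel r ts) e = snd S r (map (eval S e) ts)"
| "sat S (Neg \<phi>) e = (\<not> sat S \<phi> e)"
| "sat S (Conj \<phi> \<psi>) e = (sat S \<phi> e \<and> sat S \<psi> e)"
| "sat S (Ex x \<phi>) e = (\<exists>a. sat S \<phi> (e(x := a)))"

fun fv_trm :: "'f trm \<Rightarrow> nat set" where
  "fv_trm (Var n) = {n}"
| "fv_trm (Fun f ts) = (\<Union>t\<in>set ts. fv_trm t)"

fun fv :: "('f, 'r) fm \<Rightarrow> nat set" where
  "fv (Eq s t) = fv_trm s \<union> fv_trm t"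
| "fv (Rel r ts) = (\<Union>t\<in>set ts. fv_trm t)"
| "fv (Neg \<phi>) = fv \<phi>"
| "fv (Conj \<phi> \<psi>) = fv \<phi> \<union> fv \<psi>"
| "fv (Ex x \<phi>) = fv \<phi> - {x}"

definition sentence :: "('f, 'r) fm \<Rightarrow> bool" where
  "sentence \<phi> \<longleftrightarrow> fv \<phi> = {}"

definition models_Th :: "('f, 'r, 'b) struct \<Rightarrow> ('f, 'r, 'a) struct \<Rightarrow> bool" where
  "models_Th N M \<longleftrightarrow> (\<forall>\<phi>. sentence \<phi> \<longrightarrow> (\<forall>e. sat M \<phi> e) \<longrightarrow> (\<forall>e. sat N \<phi> e))"

definition tuples :: "nat \<Rightarrow> 'a list set" where
  "tuples k = {xs. length xs = k}"

definition definable :: "('f, 'r, 'a) struct \<Rightarrow> nat \<Rightarrow> 'a list set \<Rightarrow> bool" where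
  "definable S k Y \<longleftrightarrow> (\<exists>\<phi> (p :: nat \<Rightarrow> 'a).
      Y = {xs \<in> tuples k. sat S \<phi> (\<lambda>i. if i < k then xs ! i else p i)})"

definition mutually_algebraic :: "nat \<Rightarrow> 'a list set \<Rightarrow> bool" where
  "mutually_algebraic k Y \<longleftrightarrow> Y \<subseteq> tuples k \<and>
     (\<exists>m::nat. \<forall>a. finite {t \<in> Y. a \<in> set t} \<and> card {t \<in> Y. a \<in> set t} \<le> m)"

text \<open>Y* \<subseteq> \<lambda>^(k+l) is padded mutually algebraic: Y* = \<sigma>(Y \<times> \<lambda>^l) for a permutation
\<sigma> of the coordinates and a mutually algebraic Y \<subseteq> \<lambda>^k.\<close>
definition padded_ma :: "nat \<Rightarrow> 'a list set \<Rightarrow> bool" where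
  "padded_ma n Ys \<longleftrightarrow> (\<exists>k l \<sigma> Y. k + l = n \<and> bij_betw \<sigma> {..<n} {..<n} \<and>
      mutually_algebraic k Y \<and>
      Ys = {s \<in> tuples n. take k (map (\<lambda>i. s ! \<sigma> i) [0..<n]) \<in> Y})"

inductive_set bool_comb :: "nat \<Rightarrow> 'a list set set \<Rightarrow> 'a list set set"
  for k :: nat and F :: "'a list set set" where
  base: "A \<in> F \<Longrightarrow> A \<in> bool_comb k F"
| top: "tuples k \<in> bool_comb k F"
| union: "A \<in> bool_comb k F \<Longrightarrow> B \<in> bool_comb k F \<Longrightarrow> A \<union> B \<in> bool_comb k F"
| compl: "A \<in> bool_comb k F \<Longrightarrow> tuples k - A \<in> bool_comb k F"

definition ma_structure :: "('f, 'r, 'a) struct \<Rightarrow> bool" where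
  "ma_structure M \<longleftrightarrow> (\<forall>k Y. definable M k Y \<longrightarrow>
      Y \<in> bool_comb k {P. definable M k P \<and> padded_ma k P})"

fun monadic_trm :: "'f trm \<Rightarrow> bool" where
  "monadic_trm (Var n) = True"
| "monadic_trm (Fun f ts) = False"

fun monadic_fm :: "('f, nat) fm \<Rightarrow> bool" where
  "monadic_fm (Eq s t) = (monadic_trm s \<and> monadic_trm t)"
| "monadic_fm (Rel r ts) = (length ts = 1 \<and> (\<forall>t\<in>set ts. monadic_trm t))"
| "monadic_fm (Neg \<phi>) = monadic_fm \<phi>"
| "monadic_fm (Conj \<phi> \<psi>) = (monadic_fm \<phi> \<and> monadic_fm \<psi>)"
| "monadic_fm (Ex x \<phi>) = monadic_fm \<phi>"

definition unary_struct :: "(nat \<Rightarrow> 'a set) \<Rightarrow> (unit, nat, 'a) struct" where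
  "unary_struct U = ((\<lambda>_ _. undefined), (\<lambda>i xs. xs ! 0 \<in> U i))"

text \<open>Y \<subseteq> universe^k is definable (without parameters) in some expansion by finitely
many unary predicates (a formula mentions only finitely many U i).\<close>
definition monadically_definable :: "nat \<Rightarrow> 'a list set \<Rightarrow> bool" where
  "monadically_definable k Y \<longleftrightarrow> (\<exists>(U :: nat \<Rightarrow> 'a set) (\<phi> :: (unit, nat) fm) (e :: nat \<Rightarrow> 'a).
      monadic_fm \<phi> \<and> fv \<phi> \<subseteq> {..<k} \<and>
      Y = {xs \<in> tuples k. sat (unary_struct U) \<phi> (\<lambda>i. if i < k then xs ! i else e i)})"

definition non_monadic_model :: "('f, 'r, 'b) struct \<Rightarrow> bool" where
  "non_monadic_model N \<longleftrightarrow> (\<exists>k Y. definable N k Y \<and> \<not> monadically_definable k Y)"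

definition diag :: "nat \<Rightarrow> 'a list set" where
  "diag k = {xs \<in> tuples k. \<exists>a. xs = replicate k a}"

end

theory Submission
  imports Defs
begin


lemma finite_fv_trm: "finite (fv_trm t)"
  by (induction t) auto
lemma finite_fv: "finite (fv \<phi>)"
  by (induction \<phi>) (auto simp: finite_fv_trm)

lemma eval_cong: "(\<forall>x\<in>fv_trm t. e x = e' x) \<Longrightarrow> eval S e t = eval S e' t"
  by (induction t) (auto cong: map_cong)

lemma sat_cong: "(\<forall>x\<in>fv \<phi>. e x = e' x) \<Longrightarrow> sat S \<phi> e = sat S \<phi> e'"
proof (induction \<phi> arbitrary: e e')
  case (Eq s t) then show ?case using eval_cong[of s e e' S] eval_cong[of t e e' S] by auto
next
  case (Rel r ts)
  have "map (eval S e) ts = map (eval S e') ts"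
    using Rel by (auto intro!: map_cong eval_cong)
  then show ?case by (simp only: sat.simps)
next
  case (Ex x \<phi>)
  have "\<And>a. sat S \<phi> (e(x:=a)) = sat S \<phi> (e'(x:=a))"
  proof -
    fix a
    show "sat S \<phi> (e(x:=a)) = sat S \<phi> (e'(x:=a))"
      by (rule Ex.IH) (use Ex.prems in auto)
  qed
  then show ?case by simp
next
  case (Conj a b)
  have "sat S a e = sat S a e'" by (rule Conj.IH(1)) (use Conj.prems in auto)
  moreover have "sat S b e = sat S b e'" by (rule Conj.IH(2)) (use Conj.prems in auto)
  ultimately show ?case by simp
next
  case (Neg a)
  have "sat S a e = sat S a e'" by (rule Neg.IH) (use Neg.prems in auto)
  then show ?case by simp
qed

definition TT :: "('f,'r) fm" where "TT = Neg (Ex 0 (Neg (Eq (Var 0) (Var 0))))"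
lemma sat_TT[simp]: "sat S TT e" by (simp add: TT_def)
lemma fv_TT[simp]: "fv TT = {}" by (simp add: TT_def)
lemma monadic_TT[simp]: "monadic_fm TT" by (simp add: TT_def)

fun exs :: "nat list \<Rightarrow> ('f,'r) fm \<Rightarrow> ('f,'r) fm" where
  "exs [] \<phi> = \<phi>" | "exs (x#xs) \<phi> = Ex x (exs xs \<phi>)"

lemma sat_exs: "sat S (exs L \<phi>) e \<longleftrightarrow> (\<exists>e'. (\<forall>i. i \<notin> set L \<longrightarrow> e' i = e i) \<and> sat S \<phi> e')"
proof (induction L arbitrary: e)
  case Nil
  then show ?case by auto
next
  case (Cons x L)
  show ?case
  proof
    assume "sat S (exs (x#L) \<phi>) e"
    then obtain a e' where h: "\<forall>i. i \<notin> set L \<longrightarrow> e' i = (e(x:=a)) i" "sat S \<phi> e'"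
      using Cons by auto
    have "\<forall>i. i \<notin> set (x#L) \<longrightarrow> e' i = e i" using h(1) by simp
    then show "\<exists>e'. (\<forall>i. i \<notin> set (x#L) \<longrightarrow> e' i = e i) \<and> sat S \<phi> e'" using h(2) by blast
  next
    assume "\<exists>e'. (\<forall>i. i \<notin> set (x#L) \<longrightarrow> e' i = e i) \<and> sat S \<phi> e'"
    then obtain e' where e': "\<forall>i. i \<notin> set (x#L) \<longrightarrow> e' i = e i" "sat S \<phi> e'" by blast
    have "\<forall>i. i \<notin> set L \<longrightarrow> e' i = (e(x:=e' x)) i" using e' by auto
    then have "sat S (exs L \<phi>) (e(x:=e' x))" using Cons e' by blast
    then show "sat S (exs (x#L) \<phi>) e" by auto
  qed
qed

lemma fv_exs[simp]: "fv (exs L \<phi>) = fv \<phi> - set L"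
  by (induction L) auto

fun conjs :: "('f,'r) fm list \<Rightarrow> ('f,'r) fm" where
  "conjs [] = TT" | "conjs (a#L) = Conj a (conjs L)"

lemma sat_conjs[simp]: "sat S (conjs L) e \<longleftrightarrow> (\<forall>\<phi>\<in>set L. sat S \<phi> e)"
  by (induction L) auto
lemma fv_conjs[simp]: "fv (conjs L) = (\<Union>\<phi>\<in>set L. fv \<phi>)"
  by (induction L) auto

fun rent :: "(nat \<Rightarrow> nat) \<Rightarrow> 'f trm \<Rightarrow> 'f trm" where
  "rent f (Var v) = Var (f v)" | "rent f (Fun g ts) = Fun g (map (rent f) ts)"
fun renf :: "(nat \<Rightarrow> nat) \<Rightarrow> ('f,'r) fm \<Rightarrow> ('f,'r) fm" where
  "renf f (Eq s t) = Eq (rent f s) (rent f t)"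
| "renf f (Rel r ts) = Rel r (map (rent f) ts)"
| "renf f (Neg \<phi>) = Neg (renf f \<phi>)"
| "renf f (Conj \<phi> \<psi>) = Conj (renf f \<phi>) (renf f \<psi>)"
| "renf f (Ex x \<phi>) = Ex (f x) (renf f \<phi>)"

lemma eval_rent: "eval S e (rent f t) = eval S (e \<circ> f) t"
  by (induction t) (auto cong: map_cong)
lemma fv_rent: "fv_trm (rent f t) = f ` fv_trm t"
  by (induction t) auto

lemma sat_renf: "inj f \<Longrightarrow> sat S (renf f \<phi>) e = sat S \<phi> (e \<circ> f)"
proof (induction \<phi> arbitrary: e)
  case (Ex x \<phi>)
  have "\<And>a. (e(f x := a)) \<circ> f = (e \<circ> f)(x := a)"
    using Ex.prems by (auto simp: inj_eq)
  then show ?case using Ex by (simp only: renf.simps sat.simps)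
qed (auto simp: eval_rent comp_def)

lemma fv_renf: "inj f \<Longrightarrow> fv (renf f \<phi>) = f ` fv \<phi>"
  by (induction \<phi>) (auto simp: fv_rent image_set_diff image_UN)

fun rr :: "('r \<Rightarrow> 's) \<Rightarrow> ('f,'r) fm \<Rightarrow> ('f,'s) fm" where
  "rr h (Eq s t) = Eq s t"
| "rr h (Rel r ts) = Rel (h r) ts"
| "rr h (Neg \<phi>) = Neg (rr h \<phi>)"
| "rr h (Conj \<phi> \<psi>) = Conj (rr h \<phi>) (rr h \<psi>)"
| "rr h (Ex x \<phi>) = Ex x (rr h \<phi>)"

lemma eval_unary: "eval (unary_struct U) e t = eval (unary_struct V) e t"
  by (induction t) (auto simp: unary_struct_def)

lemma sat_rr: "sat (unary_struct U) (rr h \<phi>) e = sat (unary_struct (U \<circ> h)) \<phi> e"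
proof (induction \<phi> arbitrary: e)
  case (Eq s t) then show ?case using eval_unary[of U e _ "U \<circ> h"] by (simp add: comp_def)
next
  case (Rel r ts)
  have "map (eval (unary_struct U) e) ts = map (eval (unary_struct (U \<circ> h)) e) ts"
    using eval_unary by auto
  then show ?case by (simp only: rr.simps sat.simps) (simp add: unary_struct_def)
qed auto

lemma fv_rr[simp]: "fv (rr h \<phi>) = fv \<phi>" by (induction \<phi>) auto
lemma monadic_rr[simp]: "monadic_fm (rr h \<phi>) = monadic_fm \<phi>" by (induction \<phi>) auto


definition mdef :: "nat \<Rightarrow> ('b list \<Rightarrow> bool) \<Rightarrow> bool" where
  "mdef k P \<longleftrightarrow> monadically_definable k {xs\<in>tuples k. P xs}"

lemma mdef_iff: "mdef k P \<longleftrightarrow> (\<exists>(U::nat \<Rightarrow> 'b set) (\<phi>::(unit,nat) fm). monadic_fm \<phi> \<and> fv \<phi> \<subseteq> {..<k} \<and>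
   (\<forall>xs\<in>tuples k. P xs \<longleftrightarrow> sat (unary_struct U) \<phi> (\<lambda>i. if i < k then xs!i else undefined)))"
proof
  assume "mdef k P"
  then obtain U \<phi> e where h: "monadic_fm \<phi>" "fv \<phi> \<subseteq> {..<k}"
    "{xs\<in>tuples k. P xs} = {xs \<in> tuples k. sat (unary_struct U) \<phi> (\<lambda>i. if i < k then xs ! i else e i)}"
    unfolding mdef_def monadically_definable_def by blast
  have "\<forall>xs\<in>tuples k. P xs \<longleftrightarrow> sat (unary_struct U) \<phi> (\<lambda>i. if i < k then xs!i else undefined)"
  proof
    fix xs :: "'b list" assume xs: "xs \<in> tuples k"
    have "P xs \<longleftrightarrow> sat (unary_struct U) \<phi> (\<lambda>i. if i < k then xs ! i else e i)"
      using h(3) xs by blast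
    also have "\<dots> \<longleftrightarrow> sat (unary_struct U) \<phi> (\<lambda>i. if i < k then xs!i else undefined)"
      by (rule sat_cong) (use h(2) in auto)
    finally show "P xs \<longleftrightarrow> sat (unary_struct U) \<phi> (\<lambda>i. if i < k then xs!i else undefined)" .
  qed
  then show "\<exists>(U::nat \<Rightarrow> 'b set) (\<phi>::(unit,nat) fm). monadic_fm \<phi> \<and> fv \<phi> \<subseteq> {..<k} \<and>
   (\<forall>xs\<in>tuples k. P xs \<longleftrightarrow> sat (unary_struct U) \<phi> (\<lambda>i. if i < k then xs!i else undefined))"
    using h by blast
next
  assume "\<exists>(U::nat \<Rightarrow> 'b set) (\<phi>::(unit,nat) fm). monadic_fm \<phi> \<and> fv \<phi> \<subseteq> {..<k} \<and>
   (\<forall>xs\<in>tuples k. P xs \<longleftrightarrow> sat (unary_struct U) \<phi> (\<lambda>i. if i < k then xs!i else undefined))"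
  then obtain U \<phi> where h: "monadic_fm \<phi>" "fv \<phi> \<subseteq> {..<k}"
     "\<forall>xs\<in>tuples k. P xs \<longleftrightarrow> sat (unary_struct U) \<phi> (\<lambda>i. if i < k then xs!i else undefined)"
    by blast
  have "{xs\<in>tuples k. P xs} = {xs \<in> tuples k. sat (unary_struct U) \<phi> (\<lambda>i. if i < k then xs ! i else undefined)}"
    using h(3) by blast
  then show "mdef k P" unfolding mdef_def monadically_definable_def
    by (intro exI[of _ U] exI[of _ \<phi>] exI[of _ "\<lambda>_. undefined"]) (use h(1,2) in blast)
qed

lemma mdef_const: "mdef k (\<lambda>_. b)"
proof -
  have "\<forall>xs\<in>tuples k. b \<longleftrightarrow> sat (unary_struct (\<lambda>_. {})) (if b then TT else Neg TT) (\<lambda>i. if i < k then xs!i else undefined)"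
    by auto
  then show ?thesis unfolding mdef_iff
    by (intro exI[of _ "\<lambda>_. {}"] exI[of _ "if b then TT else Neg TT"]) auto
qed

lemma mdef_eq: "i < k \<Longrightarrow> j < k \<Longrightarrow> mdef k (\<lambda>xs. xs!i = xs!j)"
  unfolding mdef_iff
  by (intro exI[of _ "\<lambda>_. {}"] exI[of _ "Eq (Var i) (Var j)"]) auto

lemma mdef_unary: "i < k \<Longrightarrow> mdef k (\<lambda>xs. xs!i \<in> A)"
  unfolding mdef_iff
  by (intro exI[of _ "\<lambda>_. A"] exI[of _ "Rel 0 [Var i]"]) (auto simp: unary_struct_def)

lemma mdef_neg: "mdef k P \<Longrightarrow> mdef k (\<lambda>xs. \<not> P xs)"
  unfolding mdef_iff
  apply (elim exE conjE)
  subgoal for U \<phi> by (intro exI[of _ U] exI[of _ "Neg \<phi>"]) auto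
  done

lemma mdef_conj: assumes "mdef k P" "mdef k Q" shows "mdef k (\<lambda>xs. P xs \<and> Q xs)"
proof -
  obtain U1 \<phi>1 where h1: "monadic_fm \<phi>1" "fv \<phi>1 \<subseteq> {..<k}"
     "\<forall>xs\<in>tuples k. P xs \<longleftrightarrow> sat (unary_struct U1) \<phi>1 (\<lambda>i. if i < k then xs!i else undefined)"
    using assms(1) unfolding mdef_iff by blast
  obtain U2 \<phi>2 where h2: "monadic_fm \<phi>2" "fv \<phi>2 \<subseteq> {..<k}"
     "\<forall>xs\<in>tuples k. Q xs \<longleftrightarrow> sat (unary_struct U2) \<phi>2 (\<lambda>i. if i < k then xs!i else undefined)"
    using assms(2) unfolding mdef_iff by blast
  define U where "U = (\<lambda>i::nat. if even i then U1 (i div 2) else U2 (i div 2))"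
  have e1: "U \<circ> (\<lambda>i. 2*i) = U1" by (auto simp: U_def)
  have e2: "U \<circ> (\<lambda>i. Suc (2*i)) = U2" by (auto simp: U_def)
  show ?thesis unfolding mdef_iff
    by (intro exI[of _ U] exI[of _ "Conj (rr (\<lambda>i. 2*i) \<phi>1) (rr (\<lambda>i. 2*i+1) \<phi>2)"])
      (use h1 h2 in \<open>auto simp: sat_rr e1 e2\<close>)
qed


inductive good :: "nat \<Rightarrow> ('f,'r) fm \<Rightarrow> bool" for n where
  geq: "i < n \<Longrightarrow> j < n \<Longrightarrow> good n (Eq (Var i) (Var j))"
| gun: "fv \<theta> \<subseteq> insert i {n..} \<Longrightarrow> good n \<theta>"
| gneg: "good n a \<Longrightarrow> good n (Neg a)"
| gconj: "good n a \<Longrightarrow> good n b \<Longrightarrow> good n (Conj a b)"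

definition defset :: "('f,'r,'a) struct \<Rightarrow> nat \<Rightarrow> ('f,'r) fm \<Rightarrow> (nat \<Rightarrow> 'a) \<Rightarrow> 'a list set" where
  "defset S n \<chi> w = {zs\<in>tuples n. sat S \<chi> (\<lambda>i. if i < n then zs!i else w i)}"

definition Rcl :: "('f,'r,'a) struct \<Rightarrow> nat \<Rightarrow> 'a list set \<Rightarrow> bool" where
  "Rcl S n Z \<longleftrightarrow> (\<exists>\<chi> w. good n \<chi> \<and> Z = defset S n \<chi> w)"

lemma good_conjs: "(\<forall>a\<in>set L. good n a) \<Longrightarrow> good n (conjs L)"
  by (induction L) (auto intro: good.intros gun[of TT 0])

lemma good_renf:
  assumes "inj f" "\<forall>i<n. f i = i" "\<forall>i\<ge>n. f i \<ge> n"
  shows "good n \<chi> \<Longrightarrow> good n (renf f \<chi>)"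
proof (induction rule: good.induct)
  case (geq i j) then show ?case using assms by (auto intro: good.geq)
next
  case (gun \<theta> i)
  have "fv (renf f \<theta>) \<subseteq> insert (f i) {n..}"
    using gun assms by (auto simp: fv_renf)
  then show ?case by (rule good.gun)
qed (auto intro: good.intros)

lemma R_top: "Rcl S n (tuples n)"
  unfolding Rcl_def defset_def by (intro exI[of _ TT] exI) (auto intro: gun[of TT 0])

lemma R_empty: "Rcl S n {}"
  unfolding Rcl_def defset_def by (intro exI[of _ "Neg TT"] exI) (auto intro!: gneg gun[of TT 0])

lemma R_compl: "Rcl S n Z \<Longrightarrow> Rcl S n (tuples n - Z)"
  unfolding Rcl_def defset_def
  apply (elim exE conjE)
  subgoal for \<chi> w by (intro exI[of _ "Neg \<chi>"] exI[of _ w]) (auto intro: gneg)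
  done

lemma R_union: assumes "Rcl S n A" "Rcl S n B" shows "Rcl S n (A \<union> B)"
proof -
  obtain \<chi>A wA where hA: "good n \<chi>A" "A = defset S n \<chi>A wA" using assms(1) unfolding Rcl_def by blast
  obtain \<chi>B wB where hB: "good n \<chi>B" "B = defset S n \<chi>B wB" using assms(2) unfolding Rcl_def by blast
  define fA where "fA = (\<lambda>i::nat. if i < n then i else n + 2*(i-n))"
  define fB where "fB = (\<lambda>i::nat. if i < n then i else n + 2*(i-n) + 1)"
  define w where "w = (\<lambda>i. if even (i-n) then wA (n + (i-n) div 2) else wB (n + (i-n) div 2))"
  have ifA: "inj fA" unfolding fA_def inj_def by auto
  have ifB: "inj fB" unfolding fB_def inj_def by auto
  have cA: "(\<lambda>i. if i < n then zs!i else w i) \<circ> fA = (\<lambda>i. if i < n then zs!i else wA i)" for zs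
    by (auto simp: fA_def w_def)
  have cB: "(\<lambda>i. if i < n then zs!i else w i) \<circ> fB = (\<lambda>i. if i < n then zs!i else wB i)" for zs
    by (auto simp: fB_def w_def)
  have g: "good n (Neg (Conj (Neg (renf fA \<chi>A)) (Neg (renf fB \<chi>B))))"
    by (intro gneg gconj good_renf[OF ifA] good_renf[OF ifB] hA hB) (auto simp: fA_def fB_def)
  have "A \<union> B = defset S n (Neg (Conj (Neg (renf fA \<chi>A)) (Neg (renf fB \<chi>B)))) w"
    using hA(2) hB(2) by (auto simp: defset_def sat_renf[OF ifA] sat_renf[OF ifB] cA cB)
  then show ?thesis using g unfolding Rcl_def by blast
qed

lemma R_Union: "finite F \<Longrightarrow> (\<forall>t\<in>F. Rcl S n (X t)) \<Longrightarrow> Rcl S n (\<Union>t\<in>F. X t)"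
  by (induction F rule: finite_induct) (auto intro: R_empty R_union)


lemma R_pts:
  assumes "\<forall>i<k. \<sigma> i < n" "length t = k"
  shows "Rcl S n {s\<in>tuples n. map (\<lambda>i. s!\<sigma> i) [0..<k] = t}"
proof -
  let ?\<chi> = "conjs (map (\<lambda>i. Eq (Var (\<sigma> i)) (Var (n+i))) [0..<k])"
  have g: "good n ?\<chi>"
    by (rule good_conjs) (auto intro!: gun[of _ "\<sigma> _"] simp del: upt_Suc)
  have "map (\<lambda>i. s!\<sigma> i) [0..<k] = t \<longleftrightarrow> sat S ?\<chi> (\<lambda>i. if i < n then s!i else t!(i-n))" for s
  proof -
    have "map (\<lambda>i. s!\<sigma> i) [0..<k] = t \<longleftrightarrow> (\<forall>i<k. s!\<sigma> i = t!i)"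
      using assms(2) by (auto simp: list_eq_iff_nth_eq)
    also have "\<dots> \<longleftrightarrow> sat S ?\<chi> (\<lambda>i. if i < n then s!i else t!(i-n))"
      using assms(1) by auto
    finally show ?thesis .
  qed
  then have "{s\<in>tuples n. map (\<lambda>i. s!\<sigma> i) [0..<k] = t} = defset S n ?\<chi> (\<lambda>j. t!(j-n))"
    by (auto simp: defset_def)
  then show ?thesis using g unfolding Rcl_def by blast
qed

lemma R_X1:
  assumes s0: "s0 < n" and sig: "\<forall>i<k. \<sigma> i < n"
    and P: "P = {xs\<in>tuples n. sat M \<phi> (\<lambda>i. if i < n then xs!i else p i)}"
    and Pc: "\<And>s. s \<in> tuples n \<Longrightarrow> (\<forall>i<k. s!\<sigma> i = s!s0) \<Longrightarrow> s \<in> P \<longleftrightarrow> replicate k (s!s0) \<in> Yc"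
  shows "Rcl M n {s\<in>tuples n. (\<forall>i<k. s!\<sigma> i = s!s0) \<and> replicate k (s!s0) \<in> Yc}"
proof -
  let ?E = "map (\<lambda>i. Eq (Var (\<sigma> i)) (Var s0)) [0..<k]"
  let ?L = "filter (\<lambda>j. j \<noteq> s0) [0..<n]"
  let ?\<theta> = "exs ?L (Conj \<phi> (conjs ?E))"
  let ?\<chi> = "Conj (conjs ?E) ?\<theta>"
  have gE: "good n (conjs ?E)" by (rule good_conjs) (use sig s0 in \<open>auto intro!: geq\<close>)
  have "fv ?\<theta> \<subseteq> insert s0 {n..}" by auto
  then have g: "good n ?\<chi>" by (intro gconj gE gun)
  have th: "sat M ?\<theta> (\<lambda>i. if i < n then s!i else p i) \<longleftrightarrow> replicate k (s!s0) \<in> Yc"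
    if s: "s \<in> tuples n" for s
  proof
    assume "sat M ?\<theta> (\<lambda>i. if i < n then s!i else p i)"
    then obtain e' where e': "\<forall>i. i \<notin> set ?L \<longrightarrow> e' i = (\<lambda>i. if i < n then s!i else p i) i"
      "sat M \<phi> e'" "\<forall>i<k. e' (\<sigma> i) = e' s0"
      unfolding sat_exs by auto
    define s' where "s' = map e' [0..<n]"
    have s't: "s' \<in> tuples n" by (simp add: s'_def tuples_def)
    have "(\<lambda>i. if i < n then s'!i else p i) = e'"
      using e'(1) by (auto simp: s'_def)
    then have "s' \<in> P" using P e'(2) s't by auto
    moreover have "\<forall>i<k. s'!\<sigma> i = s'!s0" using e'(3) sig s0 by (auto simp: s'_def)
    ultimately have "replicate k (s'!s0) \<in> Yc" using Pc s't by blast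
    moreover have "s'!s0 = s!s0" using e'(1) s0 by (auto simp: s'_def)
    ultimately show "replicate k (s!s0) \<in> Yc" by simp
  next
    assume r: "replicate k (s!s0) \<in> Yc"
    define s1 where "s1 = replicate n (s!s0)"
    have s1t: "s1 \<in> tuples n" by (simp add: s1_def tuples_def)
    have "s1 \<in> P" using Pc[OF s1t] r s0 sig by (auto simp: s1_def)
    then have "sat M \<phi> (\<lambda>i. if i < n then s1!i else p i)" using P by auto
    moreover have "\<forall>i. i \<notin> set ?L \<longrightarrow> (\<lambda>i. if i < n then s1!i else p i) i = (\<lambda>i. if i < n then s!i else p i) i"
      using s0 by (auto simp: s1_def)
    moreover have "\<forall>i<k. (\<lambda>i. if i < n then s1!i else p i) (\<sigma> i) = (\<lambda>i. if i < n then s1!i else p i) s0"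
      using s0 sig by (auto simp: s1_def)
    ultimately show "sat M ?\<theta> (\<lambda>i. if i < n then s!i else p i)"
      unfolding sat_exs by (intro exI[of _ "\<lambda>i. if i < n then s1!i else p i"]) auto
  qed
  have "{s\<in>tuples n. (\<forall>i<k. s!\<sigma> i = s!s0) \<and> replicate k (s!s0) \<in> Yc} = defset M n ?\<chi> p"
    using th s0 sig by (auto simp: defset_def)
  then show ?thesis using g unfolding Rcl_def by blast
qed


lemma finF:
  assumes H: "\<forall>k\<ge>2. \<forall>Y. definable M k Y \<longrightarrow> mutually_algebraic k Y \<longrightarrow> finite (Y - diag k)"
    and P: "P = {xs\<in>tuples n. sat M \<phi> (\<lambda>i. if i < n then xs!i else p i)}"
    and Pc: "P = {s\<in>tuples n. map (\<lambda>i. s!\<sigma> i) [0..<k] \<in> Yc}"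
    and bij: "bij_betw \<sigma> {..<n} {..<n}" and kn: "k \<le> n" and k0: "0 < k"
    and ma: "mutually_algebraic k Yc"
  shows "finite {t\<in>Yc. t \<notin> diag k}"
proof (cases "k = 1")
  case True
  have "t \<in> diag k" if "t \<in> Yc" for t
  proof -
    have "length t = 1" using that ma True by (auto simp: mutually_algebraic_def tuples_def)
    then have "t = replicate 1 (t!0)" by (cases t) auto
    then show ?thesis using True \<open>length t = 1\<close> by (auto simp: diag_def tuples_def)
  qed
  then have "{t\<in>Yc. t \<notin> diag k} = {}" by blast
  then show ?thesis by (metis finite.emptyI)
next
  case False
  then have k2: "k \<ge> 2" using k0 by simp
  define core where "core s = map (\<lambda>i. s!\<sigma> i) [0..<k]" for s :: "'a list"
  define Im where "Im = \<sigma> ` {..<k}"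
  define s0 where "s0 = \<sigma> 0"
  have sig: "\<forall>i<n. \<sigma> i < n" using bij by (auto simp: bij_betw_def)
  have injk: "inj_on \<sigma> {..<k}" using bij kn by (auto simp: bij_betw_def intro: inj_on_subset)
  have s0n: "s0 < n" using sig kn k0 by (simp add: s0_def)
  have s0I: "s0 \<in> Im" using k0 by (simp add: s0_def Im_def)
  have YcT: "Yc \<subseteq> tuples k" using ma by (simp add: mutually_algebraic_def)
  obtain m where mm: "\<forall>a. finite {t \<in> Yc. a \<in> set t} \<and> card {t \<in> Yc. a \<in> set t} \<le> m"
    using ma by (auto simp: mutually_algebraic_def)
  define P' where "P' = {s\<in>P. \<forall>j<n. j \<notin> Im \<longrightarrow> s!j = s!s0}"
  have P'T: "P' \<subseteq> tuples n" using P by (auto simp: P'_def)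
  have Pc': "s \<in> P \<longleftrightarrow> s \<in> tuples n \<and> core s \<in> Yc" for s using Pc by (auto simp: core_def)
  let ?\<psi> = "Conj \<phi> (conjs (map (\<lambda>j. Eq (Var j) (Var s0)) (filter (\<lambda>j. j \<notin> Im) [0..<n])))"
  have "P' = {xs\<in>tuples n. sat M ?\<psi> (\<lambda>i. if i < n then xs!i else p i)}"
    using s0n by (auto simp: P'_def P)
  then have dP': "definable M n P'" unfolding definable_def by blast
  have inset: "a \<in> set (core s)" if "s \<in> P'" "a \<in> set s" for s a
  proof -
    from that obtain j where j: "j < length s" "s!j = a" by (auto simp: in_set_conv_nth)
    have ln: "length s = n" using that P'T by (auto simp: tuples_def)
    show ?thesis
    proof (cases "j \<in> Im")
      case True
      then obtain i where "i < k" "j = \<sigma> i" by (auto simp: Im_def)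
      then show ?thesis using j by (auto simp: core_def in_set_conv_nth intro!: exI[of _ i])
    next
      case False
      then have "a = s!s0" using that j ln by (auto simp: P'_def)
      then show ?thesis using k0 by (auto simp: core_def s0_def in_set_conv_nth intro!: exI[of _ 0])
    qed
  qed
  have cinj: "inj_on core P'"
  proof (rule inj_onI)
    fix s s' assume s: "s \<in> P'" and s': "s' \<in> P'" and c: "core s = core s'"
    have ln: "length s = n" "length s' = n" using s s' P'T by (auto simp: tuples_def)
    have ci: "s!\<sigma> i = s'!\<sigma> i" if "i < k" for i
    proof -
      have "core s ! i = core s' ! i" using c by simp
      then show ?thesis using that by (simp add: core_def)
    qed
    show "s = s'"
    proof (rule nth_equalityI)
      show "length s = length s'" using ln by simp
      fix j assume "j < length s"
      then have jn: "j < n" using ln by simp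
      show "s!j = s'!j"
      proof (cases "j \<in> Im")
        case True
        then show ?thesis using ci by (auto simp: Im_def)
      next
        case False
        then have "s!j = s!s0" "s'!j = s'!s0" using s s' jn by (auto simp: P'_def)
        then show ?thesis using ci[OF k0] by (simp add: s0_def)
      qed
    qed
  qed
  have maP': "mutually_algebraic n P'"
    unfolding mutually_algebraic_def
  proof (intro conjI P'T exI[of _ m] allI)
    fix a
    have sub: "core ` {t \<in> P'. a \<in> set t} \<subseteq> {t \<in> Yc. a \<in> set t}"
      using inset Pc' by (auto simp: P'_def)
    have ij: "inj_on core {t \<in> P'. a \<in> set t}" using cinj by (rule inj_on_subset) auto
    have fin: "finite {t \<in> Yc. a \<in> set t}" using mm by blast
    show "finite {t \<in> P'. a \<in> set t}"
      using finite_subset[OF sub fin] ij by (simp add: finite_image_iff)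
    have "card {t \<in> P'. a \<in> set t} = card (core ` {t \<in> P'. a \<in> set t})"
      using ij by (simp add: card_image)
    also have "\<dots> \<le> card {t \<in> Yc. a \<in> set t}" by (rule card_mono[OF fin sub])
    also have "\<dots> \<le> m" using mm by blast
    finally show "card {t \<in> P'. a \<in> set t} \<le> m" .
  qed
  have fin: "finite (P' - diag n)" using H k2 kn dP' maP' by auto
  have "{t\<in>Yc. t \<notin> diag k} \<subseteq> core ` (P' - diag n)"
  proof
    fix t assume t: "t \<in> {t\<in>Yc. t \<notin> diag k}"
    have lt: "length t = k" using t YcT by (auto simp: tuples_def)
    define s where "s = map (\<lambda>j. if j \<in> Im then t ! (the_inv_into {..<k} \<sigma> j) else t!0) [0..<n]"
    have st: "s \<in> tuples n" by (simp add: s_def tuples_def)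
    have inv: "the_inv_into {..<k} \<sigma> (\<sigma> i) = i" if "i < k" for i
      using injk that by (simp add: the_inv_into_f_f)
    have ssig: "s!\<sigma> i = t!i" if "i < k" for i
      using that sig kn inv by (auto simp: s_def Im_def)
    have cs: "core s = t" using ssig lt by (auto simp: core_def list_eq_iff_nth_eq)
    have sP: "s \<in> P" using Pc' st cs t by auto
    have ss0: "s!s0 = t!0" using ssig[OF k0] by (simp add: s0_def)
    have "s \<in> P'" using sP ss0 by (auto simp: P'_def s_def)
    moreover have "s \<notin> diag n"
    proof
      assume "s \<in> diag n"
      then obtain a where "s = replicate n a" by (auto simp: diag_def)
      then have "core s = replicate k a" using sig kn by (auto simp: core_def list_eq_iff_nth_eq)
      then show False using cs t lt by (auto simp: diag_def tuples_def)
    qed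
    ultimately show "t \<in> core ` (P' - diag n)" using cs by force
  qed
  then show ?thesis using fin finite_subset by blast
qed

lemma base_case:
  assumes H: "\<forall>k\<ge>2. \<forall>Y. definable M k Y \<longrightarrow> mutually_algebraic k Y \<longrightarrow> finite (Y - diag k)"
    and dP: "definable M n P" and pP: "padded_ma n P"
  shows "Rcl M n P"
proof -
  obtain \<phi> p where P: "P = {xs\<in>tuples n. sat M \<phi> (\<lambda>i. if i < n then xs!i else p i)}"
    using dP unfolding definable_def by blast
  obtain k l \<sigma> Yc where kl: "k + l = n" and bij: "bij_betw \<sigma> {..<n} {..<n}"
    and ma: "mutually_algebraic k Yc"
    and Pd: "P = {s\<in>tuples n. take k (map (\<lambda>i. s!\<sigma> i) [0..<n]) \<in> Yc}"
    using pP unfolding padded_ma_def by blast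
  define core where "core s = map (\<lambda>i. s!\<sigma> i) [0..<k]" for s :: "'a list"
  have tk: "take k (map (\<lambda>i. s!\<sigma> i) [0..<n]) = core s" for s
    using kl by (simp add: core_def take_map take_upt)
  have Pc: "P = {s\<in>tuples n. core s \<in> Yc}" using Pd tk by simp
  have sig: "\<forall>i<n. \<sigma> i < n" using bij by (auto simp: bij_betw_def)
  have YcT: "Yc \<subseteq> tuples k" using ma by (simp add: mutually_algebraic_def)
  show ?thesis
  proof (cases "k = 0")
    case True
    then have "core s = []" for s by (simp add: core_def)
    then have "P = (if [] \<in> Yc then tuples n else {})" using Pc by auto
    then show ?thesis by (cases "[] \<in> Yc") (simp_all add: R_top R_empty)
  next
    case False
    define s0 where "s0 = \<sigma> 0"
    have s0n: "s0 < n" using sig kl False by (simp add: s0_def)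
    have sigk: "\<forall>i<k. \<sigma> i < n" using sig kl by simp
    define F where "F = {t\<in>Yc. t \<notin> diag k}"
    have finF: "finite F" unfolding F_def
      by (rule finF[OF H P Pc[unfolded core_def] bij _ _ ma]) (use kl False in auto)
    have cr: "core s = replicate k (s!s0)" if "\<forall>i<k. s!\<sigma> i = s!s0" for s
      using that by (auto simp: core_def list_eq_iff_nth_eq)
    have eq: "P = {s\<in>tuples n. (\<forall>i<k. s!\<sigma> i = s!s0) \<and> replicate k (s!s0) \<in> Yc}
        \<union> (\<Union>t\<in>F. {s\<in>tuples n. map (\<lambda>i. s!\<sigma> i) [0..<k] = t})"
    proof (intro equalityI subsetI)
      fix s assume s: "s \<in> P"
      then have st: "s \<in> tuples n" and cY: "core s \<in> Yc" using Pc by auto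
      show "s \<in> {s\<in>tuples n. (\<forall>i<k. s!\<sigma> i = s!s0) \<and> replicate k (s!s0) \<in> Yc}
        \<union> (\<Union>t\<in>F. {s\<in>tuples n. map (\<lambda>i. s!\<sigma> i) [0..<k] = t})"
      proof (cases "core s \<in> diag k")
        case True
        then obtain a where a: "core s = replicate k a" by (auto simp: diag_def)
        have "\<forall>i<k. s!\<sigma> i = a" using a by (auto simp: core_def list_eq_iff_nth_eq)
        then have "\<forall>i<k. s!\<sigma> i = s!s0" "s!s0 = a" using False by (auto simp: s0_def)
        then show ?thesis using st cY a by auto
      next
        case nd: False
        then have "core s \<in> F" using cY by (simp add: F_def)
        then show ?thesis using st by (auto simp: core_def)
      qed
    next
      fix s assume "s \<in> {s\<in>tuples n. (\<forall>i<k. s!\<sigma> i = s!s0) \<and> replicate k (s!s0) \<in> Yc}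
        \<union> (\<Union>t\<in>F. {s\<in>tuples n. map (\<lambda>i. s!\<sigma> i) [0..<k] = t})"
      then show "s \<in> P"
      proof
        assume "s \<in> {s\<in>tuples n. (\<forall>i<k. s!\<sigma> i = s!s0) \<and> replicate k (s!s0) \<in> Yc}"
        then show "s \<in> P" using cr Pc by auto
      next
        assume "s \<in> (\<Union>t\<in>F. {s\<in>tuples n. map (\<lambda>i. s!\<sigma> i) [0..<k] = t})"
        then show "s \<in> P" using Pc by (auto simp: F_def core_def)
      qed
    qed
    have R1: "Rcl M n {s\<in>tuples n. (\<forall>i<k. s!\<sigma> i = s!s0) \<and> replicate k (s!s0) \<in> Yc}"
      by (rule R_X1[OF s0n sigk P]) (use cr Pc in auto)
    have R2: "Rcl M n (\<Union>t\<in>F. {s\<in>tuples n. map (\<lambda>i. s!\<sigma> i) [0..<k] = t})"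
    proof (rule R_Union[OF finF], intro ballI)
      fix t assume "t \<in> F"
      then have "length t = k" using YcT by (auto simp: F_def tuples_def)
      then show "Rcl M n {s\<in>tuples n. map (\<lambda>i. s!\<sigma> i) [0..<k] = t}"
        by (rule R_pts[OF sigk])
    qed
    show ?thesis using eq R_union[OF R1 R2] by simp
  qed
qed


lemma mdef_ext: "mdef k Q \<Longrightarrow> (\<And>xs. P xs = Q xs) \<Longrightarrow> mdef k P"
proof -
  assume "mdef k Q" "\<And>xs. P xs = Q xs"
  then have "P = Q" by auto
  then show ?thesis using \<open>mdef k Q\<close> by simp
qed

lemma good_mdef:
  fixes N :: "('f,'r,'b) struct"
  assumes kn: "k \<le> n"
  shows "good n \<chi> \<Longrightarrow> mdef k (\<lambda>xs. sat N \<chi> (\<lambda>i. if i < k then xs!i else g i))"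
proof (induction rule: good.induct)
  case (geq i j)
  show ?case
  proof (cases "i < k")
    case ik: True
    show ?thesis
    proof (cases "j < k")
      case True
      then show ?thesis using ik by (intro mdef_ext[OF mdef_eq[OF ik True]]) auto
    next
      case False
      then show ?thesis using ik by (intro mdef_ext[OF mdef_unary[OF ik, of "{g j}"]]) auto
    qed
  next
    case ik: False
    show ?thesis
    proof (cases "j < k")
      case True
      then show ?thesis using ik by (intro mdef_ext[OF mdef_unary[OF True, of "{g i}"]]) auto
    next
      case False
      then show ?thesis using ik by (intro mdef_ext[OF mdef_const[of k "g i = g j"]]) auto
    qed
  qed
next
  case (gun \<theta> i)
  show ?case
  proof (cases "i < k")
    case True
    show ?thesis
    proof (rule mdef_ext[OF mdef_unary[OF True, of "{a. sat N \<theta> (g(i:=a))}"]])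
      fix xs :: "'b list"
      have "sat N \<theta> (\<lambda>ia. if ia < k then xs ! ia else g ia) = sat N \<theta> (g(i:=xs!i))"
        by (rule sat_cong) (use gun kn True in auto)
      then show "sat N \<theta> (\<lambda>ia. if ia < k then xs ! ia else g ia) = (xs ! i \<in> {a. sat N \<theta> (g(i := a))})"
        by simp
    qed
  next
    case False
    show ?thesis
    proof (rule mdef_ext[OF mdef_const[of k "sat N \<theta> g"]])
      fix xs :: "'b list"
      show "sat N \<theta> (\<lambda>ia. if ia < k then xs ! ia else g ia) = sat N \<theta> g"
        by (rule sat_cong) (use gun kn False in auto)
    qed
  qed
next
  case (gneg a)
  then show ?case using mdef_neg by fastforce
next
  case (gconj a b)
  then show ?case using mdef_conj by fastforce
qed

lemma bc_R:
  assumes H: "\<forall>k\<ge>2. \<forall>Y. definable M k Y \<longrightarrow> mutually_algebraic k Y \<longrightarrow> finite (Y - diag k)"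
  shows "Z \<in> bool_comb n {P. definable M n P \<and> padded_ma n P} \<Longrightarrow> Rcl M n Z"
proof (induction rule: bool_comb.induct)
  case (base A) then show ?case using base_case[OF H] by blast
next
  case top then show ?case by (rule R_top)
next
  case (union A B) then show ?case using R_union by blast
next
  case (compl A) then show ?case using R_compl by blast
qed


theorem lemma4p4:
  fixes M :: "('f, 'r, 'a) struct" and N :: "('f, 'r, 'b) struct"
  assumes "infinite (UNIV :: 'a set)"
    and "ma_structure M"
    and "models_Th N M"
    and "non_monadic_model N"
  shows "\<exists>k \<ge> 2. \<exists>Y. definable M k Y \<and> mutually_algebraic k Y \<and> infinite (Y - diag k)"
proof (rule ccontr)
  assume neg: "\<not> (\<exists>k \<ge> 2. \<exists>Y. definable M k Y \<and> mutually_algebraic k Y \<and> infinite (Y - diag k))"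
  then have H: "\<forall>k\<ge>2. \<forall>Y. definable M k Y \<longrightarrow> mutually_algebraic k Y \<longrightarrow> finite (Y - diag k)" by blast
  obtain k Y where dY: "definable N k Y" and nm: "\<not> monadically_definable k Y"
    using assms(4) unfolding non_monadic_model_def by blast
  obtain \<phi> pN where Y: "Y = {xs\<in>tuples k. sat N \<phi> (\<lambda>i. if i < k then xs!i else pN i)}"
    using dY unfolding definable_def by blast
  obtain n0 where n0: "fv \<phi> \<subseteq> {..<n0}" using finite_fv[of \<phi>] unfolding finite_nat_set_iff_bounded by auto
  define n where "n = max n0 k"
  have fvn: "fv \<phi> \<subseteq> {..<n}" using n0 by (auto simp: n_def)
  have kn: "k \<le> n" by (simp add: n_def)
  define Z where "Z = {zs\<in>tuples n. sat M \<phi> (\<lambda>i. if i < n then zs!i else undefined)}"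
  have "definable M n Z" unfolding definable_def Z_def by (intro exI[of _ \<phi>] exI[of _ "\<lambda>_. undefined"]) (rule refl)
  then have "Z \<in> bool_comb n {P. definable M n P \<and> padded_ma n P}"
    using assms(2) unfolding ma_structure_def by blast
  then have "Rcl M n Z" by (rule bc_R[OF H])
  then obtain \<chi> w where g\<chi>: "good n \<chi>" and Zd: "Z = defset M n \<chi> w"
    unfolding Rcl_def by blast
  obtain vs where vs: "set vs = fv \<chi> - {..<n}"
    using finite_list[of "fv \<chi> - {..<n}"] finite_fv[of \<chi>] by blast
  define IF where "IF = Conj (Neg (Conj \<phi> (Neg \<chi>))) (Neg (Conj \<chi> (Neg \<phi>)))"
  have IFM: "sat M IF e \<longleftrightarrow> (sat M \<phi> e \<longleftrightarrow> sat M \<chi> e)" for e by (auto simp: IF_def)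
  have IFN: "sat N IF e \<longleftrightarrow> (sat N \<phi> e \<longleftrightarrow> sat N \<chi> e)" for e by (auto simp: IF_def)
  define \<sigma> where "\<sigma> = exs vs (Neg (exs [0..<n] (Neg IF)))"
  have sent: "sentence \<sigma>"
    using fvn vs by (auto simp: sentence_def \<sigma>_def IF_def)
  have M\<sigma>: "\<forall>e. sat M \<sigma> e"
  proof
    fix e
    define e1 where "e1 = (\<lambda>i. if i \<in> set vs then w i else e i)"
    have "sat M IF e2" if agree: "\<forall>i. i \<notin> set [0..<n] \<longrightarrow> e2 i = e1 i" for e2
    proof -
      define zs where "zs = map e2 [0..<n]"
      have zt: "zs \<in> tuples n" by (simp add: zs_def tuples_def)
      have 1: "sat M \<phi> e2 = sat M \<phi> (\<lambda>i. if i < n then zs!i else undefined)"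
        by (rule sat_cong) (use fvn in \<open>auto simp: zs_def\<close>)
      have 2: "sat M \<chi> e2 = sat M \<chi> (\<lambda>i. if i < n then zs!i else w i)"
        by (rule sat_cong) (use agree vs in \<open>auto simp: zs_def e1_def\<close>)
      have "sat M \<phi> (\<lambda>i. if i < n then zs!i else undefined) \<longleftrightarrow> zs \<in> Z" using zt by (simp add: Z_def)
      also have "\<dots> \<longleftrightarrow> sat M \<chi> (\<lambda>i. if i < n then zs!i else w i)" using zt by (simp add: Zd defset_def)
      finally show ?thesis using 1 2 IFM by simp
    qed
    then have "sat M (Neg (exs [0..<n] (Neg IF))) e1"
      unfolding sat.simps sat_exs by blast
    moreover have "\<forall>i. i \<notin> set vs \<longrightarrow> e1 i = e i" by (simp add: e1_def)
    ultimately show "sat M \<sigma> e" unfolding \<sigma>_def sat_exs by blast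
  qed
  have "\<forall>e. sat N \<sigma> e" using assms(3) sent M\<sigma> unfolding models_Th_def by blast
  then have "sat N \<sigma> (\<lambda>_. undefined)" by blast
  then obtain e1 where e1: "\<forall>e2. (\<forall>i. i \<notin> set [0..<n] \<longrightarrow> e2 i = e1 i) \<longrightarrow> sat N IF e2"
    unfolding \<sigma>_def sat_exs sat.simps by blast
  define g where "g = (\<lambda>i. if i < n then pN i else e1 i)"
  have "Y = {xs\<in>tuples k. sat N \<chi> (\<lambda>i. if i < k then xs!i else g i)}"
  proof -
    have "sat N \<phi> (\<lambda>i. if i < k then xs!i else pN i) \<longleftrightarrow> sat N \<chi> (\<lambda>i. if i < k then xs!i else g i)" for xs
    proof -
      have "sat N \<phi> (\<lambda>i. if i < k then xs!i else pN i) = sat N \<phi> (\<lambda>i. if i < k then xs!i else g i)"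
        by (rule sat_cong) (use fvn in \<open>auto simp: g_def\<close>)
      moreover have "sat N IF (\<lambda>i. if i < k then xs!i else g i)"
        using e1 kn by (auto simp: g_def)
      ultimately show ?thesis using IFN by simp
    qed
    then show ?thesis using Y by simp
  qed
  moreover have "mdef k (\<lambda>xs. sat N \<chi> (\<lambda>i. if i < k then xs!i else g i))"
    by (rule good_mdef[OF kn g\<chi>])
  ultimately have "monadically_definable k Y" by (simp add: mdef_def)
  then show False using nm by blast
qed

end
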